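(* Let $R=K[X_1,\dots,X_d]$ be a polynomial ring over a field $K$ and let $\mathcal{F}_{ij}$ be a monomial ideal of $R$ for each $i=1,\dots,r$ and $j=1,\dots,s$. For $\mathbf{n}\in\mathbb{N}^r$ set $\mathcal{F}_j^{\mathbf{n}}=\mathcal{F}_{1j}^{n_1}\cdots\mathcal{F}_{rj}^{n_r}$. Then $\bigoplus_{\mathbf{n}\in\mathbb{N}^r}\left(\bigcap_{j=1}^s\mathcal{F}_j^{\mathbf{n}}\right)t_1^{n_1}\cdots t_r^{n_r}\subseteq R[t_1,\dots,t_r]$ is an $\mathbb{N}^r$-graded Noetherian $R$-algebra.
   Context: $t_1,\dots,t_r$ are indeterminates over $R$. *)

theory Defs
  imports "HOL-Library.Poly_Mapping" "HOL-Algebra.Ring_Divisibility"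
begin

(* Polynomial ring over a field in the finitely many variables indexed by the
  finite type 'v: monomials are exponent vectors 'v \<Rightarrow>\<^sub>0 nat. *)
type_synonym ('v, 'k) mpoly = "('v \<Rightarrow>\<^sub>0 nat) \<Rightarrow>\<^sub>0 'k"

definition ideal_gen :: "'a::comm_ring_1 set \<Rightarrow> 'a set" where
  "ideal_gen S = {x. \<exists>T c. finite T \<and> T \<subseteq> S \<and> x = (\<Sum>s\<in>T. c s * s)}"

definition is_ideal :: "'a::comm_ring_1 set \<Rightarrow> bool" where
  "is_ideal I \<longleftrightarrow> 0 \<in> I \<and> (\<forall>a\<in>I. \<forall>b\<in>I. a + b \<in> I) \<and> (\<forall>r a. a \<in> I \<longrightarrow> r * a \<in> I)"

definition monomial_ideal :: "('v, 'k::field) mpoly set \<Rightarrow> bool" where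
  "monomial_ideal I \<longleftrightarrow> is_ideal I \<and>
     (\<exists>M. M \<subseteq> range (\<lambda>m. Poly_Mapping.single m 1) \<and> I = ideal_gen M)"

definition ideal_mult :: "'a::comm_ring_1 set \<Rightarrow> 'a set \<Rightarrow> 'a set" where
  "ideal_mult I J = ideal_gen {a * b | a b. a \<in> I \<and> b \<in> J}"

fun ideal_pow :: "'a::comm_ring_1 set \<Rightarrow> nat \<Rightarrow> 'a set" where
  "ideal_pow I 0 = UNIV"
| "ideal_pow I (Suc n) = ideal_mult I (ideal_pow I n)"

definition ideal_prod :: "('i \<Rightarrow> 'a::comm_ring_1 set) \<Rightarrow> 'i set \<Rightarrow> 'a set" where
  "ideal_prod J A = ideal_gen {(\<Prod>i\<in>A. a i) | a. \<forall>i\<in>A. a i \<in> J i}"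

definition multi_pow :: "('i::finite \<Rightarrow> 'j \<Rightarrow> 'a::comm_ring_1 set) \<Rightarrow> 'j \<Rightarrow> ('i \<Rightarrow>\<^sub>0 nat) \<Rightarrow> 'a set" where
  "multi_pow F j n = ideal_prod (\<lambda>i. ideal_pow (F i j) (Poly_Mapping.lookup n i)) UNIV"

(* The algebra \<Oplus>_n (\<Inter>_j F_j^n) t^n inside R[t_i : i], elements of R[t] being
  polynomials in the variables t indexed by 'i with coefficients in R. *)
definition rees_alg :: "('i::finite \<Rightarrow> 'j \<Rightarrow> ('v, 'k::field) mpoly set)
     \<Rightarrow> (('i \<Rightarrow>\<^sub>0 nat) \<Rightarrow>\<^sub>0 ('v, 'k) mpoly) set" where
  "rees_alg F = {f. \<forall>n. Poly_Mapping.lookup f n \<in> (\<Inter>j. multi_pow F j n)}"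

definition sub_ring_struct :: "'a::comm_ring_1 set \<Rightarrow> 'a ring" where
  "sub_ring_struct A = \<lparr>carrier = A, monoid.mult = (*), one = 1, zero = 0, add = (+)\<rparr>"

end

theory Submission
  imports Defs "HOL-Library.Product_Plus" "HOL-Library.Function_Algebras"
begin
abbreviation "lkp \<equiv> Poly_Mapping.lookup"
abbreviation "kys \<equiv> Poly_Mapping.keys"

lemma ig_zero: "0 \<in> ideal_gen S"
  unfolding ideal_gen_def by (rule CollectI, rule exI[of _ "{}"]) simp

lemma ig_base: "s \<in> S \<Longrightarrow> s \<in> ideal_gen S"
  unfolding ideal_gen_def by (rule CollectI, rule exI[of _ "{s}"], rule exI[of _ "\<lambda>_. 1"]) simp

lemma ig_add:
  assumes "x \<in> ideal_gen S" "y \<in> ideal_gen S" shows "x + y \<in> ideal_gen S"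
proof -
  obtain T1 c1 where 1: "finite T1" "T1 \<subseteq> S" "x = (\<Sum>s\<in>T1. c1 s * s)" using assms(1) unfolding ideal_gen_def by blast
  obtain T2 c2 where 2: "finite T2" "T2 \<subseteq> S" "y = (\<Sum>s\<in>T2. c2 s * s)" using assms(2) unfolding ideal_gen_def by blast
  define c where "c s = (if s \<in> T1 then c1 s else 0) + (if s \<in> T2 then c2 s else 0)" for s
  have e1: "(\<Sum>s\<in>T1 \<union> T2. (if s \<in> T1 then c1 s * s else 0)) = (\<Sum>s\<in>T1. (if s \<in> T1 then c1 s * s else 0))"
    by (rule sum.mono_neutral_left[symmetric]) (use 1 2 in auto)
  have e2: "(\<Sum>s\<in>T1 \<union> T2. (if s \<in> T2 then c2 s * s else 0)) = (\<Sum>s\<in>T2. (if s \<in> T2 then c2 s * s else 0))"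
    by (rule sum.mono_neutral_left[symmetric]) (use 1 2 in auto)
  have "(\<Sum>s\<in>T1 \<union> T2. c s * s) = (\<Sum>s\<in>T1 \<union> T2. (if s \<in> T1 then c1 s * s else 0) + (if s \<in> T2 then c2 s * s else 0))"
    unfolding c_def by (rule sum.cong) (auto simp: distrib_right)
  also have "\<dots> = (\<Sum>s\<in>T1. (if s \<in> T1 then c1 s * s else 0)) + (\<Sum>s\<in>T2. (if s \<in> T2 then c2 s * s else 0))"
    using e1 e2 by (simp only: sum.distrib)
  also have "\<dots> = x + y" using 1(3) 2(3) by simp
  finally have eq: "x + y = (\<Sum>s\<in>T1 \<union> T2. c s * s)" by simp
  have "finite (T1 \<union> T2)" "T1 \<union> T2 \<subseteq> S" using 1 2 by auto
  then show ?thesis unfolding ideal_gen_def using eq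
    by (intro CollectI exI[of _ "T1 \<union> T2"] exI[of _ c] conjI)
qed

lemma ig_mult:
  assumes "x \<in> ideal_gen S" shows "r * x \<in> ideal_gen S"
proof -
  obtain T1 c1 where 1: "finite T1" "T1 \<subseteq> S" "x = (\<Sum>s\<in>T1. c1 s * s)" using assms(1) unfolding ideal_gen_def by blast
  have "r * x = (\<Sum>s\<in>T1. (r * c1 s) * s)" using 1 by (simp add: sum_distrib_left mult.assoc)
  then show ?thesis unfolding ideal_gen_def using 1
    by (intro CollectI exI[of _ T1] exI[of _ "\<lambda>s. r * c1 s"] conjI)
qed

lemma is_ideal_ig: "is_ideal (ideal_gen S)"
  unfolding is_ideal_def using ig_zero ig_add ig_mult by blast

lemma ideal_sum:
  assumes "is_ideal I" "finite T" "\<And>t. t \<in> T \<Longrightarrow> f t \<in> I" shows "sum f T \<in> I"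
  using assms(2,3)
proof (induction T rule: finite_induct)
  case empty then show ?case using assms(1) unfolding is_ideal_def by simp
next
  case (insert x F) then show ?case using assms(1) unfolding is_ideal_def by simp
qed

lemma ig_min:
  assumes "is_ideal I" "S \<subseteq> I" shows "ideal_gen S \<subseteq> I"
proof
  fix x assume "x \<in> ideal_gen S"
  then obtain T c where T: "finite T" "T \<subseteq> S" "x = (\<Sum>s\<in>T. c s * s)" unfolding ideal_gen_def by blast
  have "(\<Sum>s\<in>T. c s * s) \<in> I"
  proof (rule ideal_sum[OF assms(1) T(1)])
    fix t assume "t \<in> T" then have "t \<in> I" using T assms by auto
    then show "c t * t \<in> I" using assms(1) unfolding is_ideal_def by blast
  qed
  then show "x \<in> I" using T by simp
qed

definition upc :: "'m::comm_monoid_add set \<Rightarrow> 'm set" where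
  "upc M = {a. \<exists>m\<in>M. \<exists>d. a = m + d}"

definition mideal :: "'m set \<Rightarrow> ('m \<Rightarrow>\<^sub>0 'k::comm_ring_1) set" where
  "mideal U = {p. kys p \<subseteq> U}"

definition ssum :: "'m::comm_monoid_add set \<Rightarrow> 'm set \<Rightarrow> 'm set" where
  "ssum A B = {a + b | a b. a \<in> A \<and> b \<in> B}"

fun spow :: "'m::comm_monoid_add set \<Rightarrow> nat \<Rightarrow> 'm set" where
  "spow A 0 = {0}"
| "spow A (Suc n) = ssum A (spow A n)"

definition sprod :: "('i \<Rightarrow> 'm::comm_monoid_add set) \<Rightarrow> 'i set \<Rightarrow> 'm set" where
  "sprod B X = {(\<Sum>i\<in>X. x i) | x. \<forall>i\<in>X. x i \<in> B i}"

abbreviation mnm :: "'m \<Rightarrow> ('m \<Rightarrow>\<^sub>0 'k::comm_ring_1)" where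
  "mnm m \<equiv> Poly_Mapping.single m 1"

lemma upc_closed: "a \<in> upc M \<Longrightarrow> a + d \<in> upc M"
  unfolding upc_def by (clarsimp, metis add.assoc)

lemma up_self: "m \<in> M \<Longrightarrow> m \<in> upc M"
  unfolding upc_def by (auto intro!: bexI[of _ m] exI[of _ 0])

lemma mideal_ideal: "is_ideal (mideal (upc M) :: ('m::comm_monoid_add \<Rightarrow>\<^sub>0 'k::comm_ring_1) set)"
  unfolding is_ideal_def mideal_def
proof (intro conjI ballI allI impI; (elim CollectE)?)
  show "0 \<in> {p::'m \<Rightarrow>\<^sub>0 'k. kys p \<subseteq> upc M}" by simp
next
  fix a b :: "'m \<Rightarrow>\<^sub>0 'k" assume "kys a \<subseteq> upc M" "kys b \<subseteq> upc M"
  then show "a + b \<in> {p. kys p \<subseteq> upc M}" using keys_add[of a b] by auto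
next
  fix r a :: "'m \<Rightarrow>\<^sub>0 'k" assume a: "kys a \<subseteq> upc M"
  have "kys (r * a) \<subseteq> upc M"
  proof
    fix x assume "x \<in> kys (r * a)"
    then obtain u v where "x = u + v" "v \<in> kys a" using keys_mult[of r a] by blast
    then show "x \<in> upc M" using a upc_closed[of v M u] by (auto simp: add.commute)
  qed
  then show "r * a \<in> {p. kys p \<subseteq> upc M}" by simp
qed

lemma poly_sum_single: "p = (\<Sum>a\<in>kys p. Poly_Mapping.single a (lkp p a))"
proof (rule poly_mapping_eqI)
  fix k
  have "lkp (\<Sum>a\<in>kys p. Poly_Mapping.single a (lkp p a)) k = (\<Sum>a\<in>kys p. (if a = k then lkp p a else 0))"
    by (simp add: lookup_sum lookup_single when_def)
  also have "\<dots> = lkp p k" by (simp add: in_keys_iff)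
  finally show "lkp p k = lkp (\<Sum>a\<in>kys p. Poly_Mapping.single a (lkp p a)) k" by simp
qed

lemma mono_in_mideal: "m \<in> upc M \<Longrightarrow> (mnm m :: 'm::comm_monoid_add \<Rightarrow>\<^sub>0 'k::comm_ring_1) \<in> mideal (upc M)"
  unfolding mideal_def by simp

lemma MI1: "ideal_gen ((mnm ` M) :: ('m::comm_monoid_add \<Rightarrow>\<^sub>0 'k::comm_ring_1) set) = mideal (upc M)"
proof
  show "ideal_gen (mnm ` M) \<subseteq> (mideal (upc M) :: ('m \<Rightarrow>\<^sub>0 'k) set)"
    by (rule ig_min[OF mideal_ideal]) (auto intro: mono_in_mideal up_self)
next
  show "mideal (upc M) \<subseteq> ideal_gen (mnm ` M :: ('m \<Rightarrow>\<^sub>0 'k) set)"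
  proof
    fix p :: "'m \<Rightarrow>\<^sub>0 'k" assume p: "p \<in> mideal (upc M)"
    have "(\<Sum>a\<in>kys p. Poly_Mapping.single a (lkp p a)) \<in> ideal_gen (mnm ` M :: ('m \<Rightarrow>\<^sub>0 'k) set)"
    proof (rule ideal_sum[OF is_ideal_ig finite_keys])
      fix a assume "a \<in> kys p"
      then have "a \<in> upc M" using p unfolding mideal_def by auto
      then obtain m d where md: "m \<in> M" "a = m + d" unfolding upc_def by auto
      have "Poly_Mapping.single a (lkp p a) = Poly_Mapping.single d (lkp p a) * (mnm m :: 'm \<Rightarrow>\<^sub>0 'k)"
        by (simp add: mult_single md add.commute)
      moreover have "(mnm m :: 'm \<Rightarrow>\<^sub>0 'k) \<in> ideal_gen (mnm ` M)" using md by (auto intro!: ig_base)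
      ultimately show "Poly_Mapping.single a (lkp p a) \<in> ideal_gen (mnm ` M :: ('m \<Rightarrow>\<^sub>0 'k) set)"
        by (metis ig_mult)
    qed
    then show "p \<in> ideal_gen (mnm ` M)" using poly_sum_single[of p] by simp
  qed
qed

lemma mideal_univ: "mideal (upc {0::'m::comm_monoid_add}) = (UNIV :: ('m \<Rightarrow>\<^sub>0 'k::comm_ring_1) set)"
  unfolding mideal_def upc_def by auto

lemma MI2: "ideal_mult (mideal (upc A)) (mideal (upc B)) = (mideal (upc (ssum A B)) :: ('m::comm_monoid_add \<Rightarrow>\<^sub>0 'k::comm_ring_1) set)"
proof
  show "ideal_mult (mideal (upc A)) (mideal (upc B)) \<subseteq> (mideal (upc (ssum A B)) :: ('m \<Rightarrow>\<^sub>0 'k) set)"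
    unfolding ideal_mult_def
  proof (rule ig_min[OF mideal_ideal], safe)
    fix p q :: "'m \<Rightarrow>\<^sub>0 'k" assume p: "p \<in> mideal (upc A)" and q: "q \<in> mideal (upc B)"
    show "p * q \<in> mideal (upc (ssum A B))" unfolding mideal_def
    proof (safe)
      fix x assume "x \<in> kys (p * q)"
      then obtain u v where uv: "x = u + v" "u \<in> kys p" "v \<in> kys q" using keys_mult[of p q] by blast
      obtain m1 d1 where 1: "m1 \<in> A" "u = m1 + d1" using uv p unfolding mideal_def upc_def by blast
      obtain m2 d2 where 2: "m2 \<in> B" "v = m2 + d2" using uv q unfolding mideal_def upc_def by blast
      have "x = (m1 + m2) + (d1 + d2)" using uv 1 2 by (simp add: ac_simps)
      moreover have "m1 + m2 \<in> ssum A B" using 1 2 unfolding ssum_def by blast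
      ultimately show "x \<in> upc (ssum A B)" unfolding upc_def by blast
    qed
  qed
next
  have "mideal (upc (ssum A B)) = ideal_gen (mnm ` ssum A B :: ('m \<Rightarrow>\<^sub>0 'k) set)" by (simp add: MI1)
  also have "\<dots> \<subseteq> ideal_mult (mideal (upc A)) (mideal (upc B))"
    unfolding ideal_mult_def
  proof (rule ig_min[OF is_ideal_ig], safe)
    fix x assume "x \<in> ssum A B"
    then obtain a b where ab: "a \<in> A" "b \<in> B" "x = a + b" unfolding ssum_def by blast
    have "(mnm x :: 'm \<Rightarrow>\<^sub>0 'k) = mnm a * mnm b" by (simp add: mult_single ab)
    moreover have "(mnm a :: 'm \<Rightarrow>\<^sub>0 'k) \<in> mideal (upc A)" "(mnm b :: 'm \<Rightarrow>\<^sub>0 'k) \<in> mideal (upc B)"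
      using ab by (auto intro: mono_in_mideal up_self)
    ultimately show "(mnm x :: 'm \<Rightarrow>\<^sub>0 'k) \<in> ideal_gen {a * b |a b. a \<in> mideal (upc A) \<and> b \<in> mideal (upc B)}"
      by (auto intro!: ig_base)
  qed
  finally show "(mideal (upc (ssum A B)) :: ('m \<Rightarrow>\<^sub>0 'k) set) \<subseteq> ideal_mult (mideal (upc A)) (mideal (upc B))" .
qed

lemma MIpow: "ideal_pow (mideal (upc A)) n = (mideal (upc (spow A n)) :: ('m::comm_monoid_add \<Rightarrow>\<^sub>0 'k::comm_ring_1) set)"
  by (induction n) (simp_all add: mideal_univ MI2)

lemma keys_prod_sub:
  assumes "finite X" "\<And>i. i \<in> X \<Longrightarrow> kys (a i) \<subseteq> upc (B i)"
  shows "kys (\<Prod>i\<in>X. a i :: 'm::comm_monoid_add \<Rightarrow>\<^sub>0 'k::comm_ring_1) \<subseteq> upc (sprod B X)"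
  using assms
proof (induction X rule: finite_induct)
  case empty
  have "(0::'m) \<in> upc (sprod B {})" unfolding upc_def sprod_def by auto
  then show ?case by simp
next
  case (insert k X)
  show ?case
  proof
    fix x assume "x \<in> kys (\<Prod>i\<in>insert k X. a i)"
    then have "x \<in> kys (a k * (\<Prod>i\<in>X. a i))" using insert by simp
    then obtain u v where uv: "x = u + v" "u \<in> kys (a k)" "v \<in> kys (\<Prod>i\<in>X. a i)" using keys_mult by blast
    obtain m1 d1 where 1: "m1 \<in> B k" "u = m1 + d1" using uv insert unfolding upc_def by blast
    have "v \<in> upc (sprod B X)" using uv insert by blast
    then obtain m2 d2 where 2: "m2 \<in> sprod B X" "v = m2 + d2" unfolding upc_def by blast
    obtain y where y: "\<forall>i\<in>X. y i \<in> B i" "m2 = (\<Sum>i\<in>X. y i)" using 2 unfolding sprod_def by blast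
    define z where "z = y(k := m1)"
    have "(\<Sum>i\<in>X. z i) = (\<Sum>i\<in>X. y i)"
      using insert(2) by (intro sum.cong) (auto simp: z_def)
    then have "(\<Sum>i\<in>insert k X. z i) = m1 + m2"
      using insert(1,2) y by (simp add: z_def)
    moreover have "\<forall>i\<in>insert k X. z i \<in> B i" using y 1 by (simp add: z_def)
    ultimately have "m1 + m2 \<in> sprod B (insert k X)" unfolding sprod_def
      by (intro CollectI exI[of _ z]) simp
    moreover have "x = (m1 + m2) + (d1 + d2)" using uv 1 2 by (simp add: ac_simps)
    ultimately show "x \<in> upc (sprod B (insert k X))" unfolding upc_def by blast
  qed
qed

lemma mono_sum: "finite X \<Longrightarrow> (mnm (\<Sum>i\<in>X. x i) :: 'm::comm_monoid_add \<Rightarrow>\<^sub>0 'k::comm_ring_1) = (\<Prod>i\<in>X. mnm (x i))"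
proof (induction X rule: finite_induct)
  case empty then show ?case by simp
next
  case (insert a F)
  have "(mnm (\<Sum>i\<in>insert a F. x i) :: 'm \<Rightarrow>\<^sub>0 'k) = mnm (x a + (\<Sum>i\<in>F. x i))" using insert by simp
  also have "\<dots> = mnm (x a) * mnm (\<Sum>i\<in>F. x i)" by (simp add: mult_single)
  also have "\<dots> = (\<Prod>i\<in>insert a F. mnm (x i))" using insert by simp
  finally show ?case .
qed

lemma MIprod:
  fixes J :: "'i \<Rightarrow> ('m::comm_monoid_add \<Rightarrow>\<^sub>0 'k::comm_ring_1) set" and B :: "'i \<Rightarrow> 'm set"
  assumes "finite X" "\<And>i. i \<in> X \<Longrightarrow> J i = mideal (upc (B i))"
  shows "ideal_prod J X = (mideal (upc (sprod B X)) :: ('m::comm_monoid_add \<Rightarrow>\<^sub>0 'k::comm_ring_1) set)"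
proof
  show "ideal_prod J X \<subseteq> (mideal (upc (sprod B X)) :: ('m \<Rightarrow>\<^sub>0 'k) set)"
    unfolding ideal_prod_def
  proof (rule ig_min[OF mideal_ideal], safe)
    fix a :: "'i \<Rightarrow> 'm \<Rightarrow>\<^sub>0 'k" assume "\<forall>i\<in>X. a i \<in> J i"
    then have "\<And>i. i \<in> X \<Longrightarrow> kys (a i) \<subseteq> upc (B i)" using assms(2) unfolding mideal_def by auto
    then show "(\<Prod>i\<in>X. a i) \<in> mideal (upc (sprod B X))"
      using keys_prod_sub[OF assms(1)] unfolding mideal_def by blast
  qed
next
  have "mideal (upc (sprod B X)) = ideal_gen (mnm ` sprod B X :: ('m \<Rightarrow>\<^sub>0 'k) set)" by (simp add: MI1)
  also have "\<dots> \<subseteq> ideal_prod J X"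
    unfolding ideal_prod_def
  proof (rule ig_min[OF is_ideal_ig], safe)
    fix s assume "s \<in> sprod B X"
    then obtain x where x: "\<forall>i\<in>X. x i \<in> B i" "s = (\<Sum>i\<in>X. x i)" unfolding sprod_def by blast
    have "(mnm s :: 'm \<Rightarrow>\<^sub>0 'k) = (\<Prod>i\<in>X. mnm (x i))" using x mono_sum[OF assms(1)] by simp
    moreover have "\<forall>i\<in>X. (mnm (x i) :: 'm \<Rightarrow>\<^sub>0 'k) \<in> J i" using x assms(2) by (auto intro: mono_in_mideal up_self)
    ultimately show "(mnm s :: 'm \<Rightarrow>\<^sub>0 'k) \<in> ideal_gen {\<Prod>i\<in>X. a i |a. \<forall>i\<in>X. a i \<in> J i}"
      by (auto intro!: ig_base)
  qed
  finally show "(mideal (upc (sprod B X)) :: ('m \<Rightarrow>\<^sub>0 'k) set) \<subseteq> ideal_prod J X" .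
qed

lemma dickson:
  fixes X :: "('a \<Rightarrow> nat) set"
  assumes "finite K"
  shows "\<exists>X0\<subseteq>X. finite X0 \<and> (\<forall>f\<in>X. \<exists>g\<in>X0. \<forall>k\<in>K. g k \<le> f k)"
  using assms
proof (induction K arbitrary: X rule: finite_induct)
  case empty
  show ?case
  proof (cases "X = {}")
    case True then show ?thesis by auto
  next
    case False
    then obtain x where "x \<in> X" by auto
    then show ?thesis by (intro exI[of _ "{x}"]) auto
  qed
next
  case (insert k K)
  obtain X0 where X0: "X0 \<subseteq> X" "finite X0" "\<forall>f\<in>X. \<exists>g\<in>X0. \<forall>k\<in>K. g k \<le> f k"
    using insert.IH[of X] by blast
  have "\<forall>v. \<exists>Y. Y \<subseteq> {f\<in>X. f k = v} \<and> finite Y \<and> (\<forall>f\<in>{f\<in>X. f k = v}. \<exists>g\<in>Y. \<forall>k\<in>K. g k \<le> f k)"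
  proof
    fix v show "\<exists>Y. Y \<subseteq> {f\<in>X. f k = v} \<and> finite Y \<and> (\<forall>f\<in>{f\<in>X. f k = v}. \<exists>g\<in>Y. \<forall>k\<in>K. g k \<le> f k)"
      by (rule insert.IH)
  qed
  from choice[OF this] obtain Y where Yall: "\<forall>v. Y v \<subseteq> {f\<in>X. f k = v} \<and> finite (Y v) \<and> (\<forall>f\<in>{f\<in>X. f k = v}. \<exists>g\<in>Y v. \<forall>k\<in>K. g k \<le> f k)"
    by blast
  have Y: "\<And>v. Y v \<subseteq> {f\<in>X. f k = v}" "\<And>v. finite (Y v)"
    "\<And>v f. f \<in> X \<Longrightarrow> f k = v \<Longrightarrow> \<exists>g\<in>Y v. \<forall>k\<in>K. g k \<le> f k"
    using Yall by auto
  define B where "B = (\<Sum>g\<in>X0. g k)"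
  define Z where "Z = X0 \<union> (\<Union>v\<in>{..B}. Y v)"
  have "Z \<subseteq> X" using X0 Y unfolding Z_def by blast
  moreover have "finite Z" using X0 Y unfolding Z_def by auto
  moreover have "\<forall>f\<in>X. \<exists>g\<in>Z. \<forall>k'\<in>insert k K. g k' \<le> f k'"
  proof
    fix f assume f: "f \<in> X"
    then obtain g where g: "g \<in> X0" "\<forall>k\<in>K. g k \<le> f k" using X0 by blast
    show "\<exists>g\<in>Z. \<forall>k'\<in>insert k K. g k' \<le> f k'"
    proof (cases "g k \<le> f k")
      case True then show ?thesis using g unfolding Z_def by auto
    next
      case False
      have "g k \<le> B" unfolding B_def using g(1) X0(2) by (intro member_le_sum) auto
      then have "f k \<le> B" using False by simp
      obtain h where h: "h \<in> Y (f k)" "\<forall>k\<in>K. h k \<le> f k" using Y(3)[OF f refl] by blast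
      have "h k = f k" using h(1) Y(1) by blast
      moreover have "h \<in> Z" unfolding Z_def using h(1) \<open>f k \<le> B\<close> by auto
      ultimately show ?thesis using h(2) by (intro bexI[of _ h]) auto
    qed
  qed
  ultimately show ?case by blast
qed

lemma pm_le_split:
  fixes g m :: "'v \<Rightarrow>\<^sub>0 nat"
  assumes "\<And>v. lkp g v \<le> lkp m v"
  shows "m = g + (m - g)"
  by (rule poly_mapping_eqI) (simp add: lookup_add lookup_minus assms)

lemma upc_finite:
  fixes M :: "('v::finite \<Rightarrow>\<^sub>0 nat) set"
  shows "\<exists>G\<subseteq>M. finite G \<and> upc G = upc M"
proof -
  obtain X0 where X0: "X0 \<subseteq> lkp ` M" "finite X0" "\<forall>f\<in>lkp ` M. \<exists>g\<in>X0. \<forall>k\<in>UNIV. g k \<le> f k"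
    using dickson[of "UNIV::'v set" "lkp ` M"] by auto
  obtain G where G: "G \<subseteq> M" "finite G" "X0 = lkp ` G"
    using X0(1,2) finite_subset_image by metis
  have "upc M \<subseteq> upc G"
  proof
    fix a assume "a \<in> upc M"
    then obtain m d where md: "m \<in> M" "a = m + d" unfolding upc_def by blast
    then obtain g where g: "g \<in> G" "\<forall>k. lkp g k \<le> lkp m k" using X0(3) G(3) by auto
    have "m = g + (m - g)" using pm_le_split[of g m] g by blast
    then have "a = g + ((m - g) + d)" using md by (metis add.assoc)
    then show "a \<in> upc G" using g unfolding upc_def by blast
  qed
  moreover have "upc G \<subseteq> upc M" using G(1) unfolding upc_def by blast
  ultimately show ?thesis using G by blast
qed

lemma sum_delta_add:
  fixes f :: "'a \<Rightarrow> nat"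
  assumes "finite G" "g \<in> G"
  shows "(\<Sum>m\<in>G. (c m + (if m = g then 1 else 0)) * f m) = (\<Sum>m\<in>G. c m * f m) + f g"
proof -
  have "(\<Sum>m\<in>G. (c m + (if m = g then 1 else 0)) * f m) = (\<Sum>m\<in>G. c m * f m + (if m = g then f m else 0))"
    by (rule sum.cong) auto
  also have "\<dots> = (\<Sum>m\<in>G. c m * f m) + (\<Sum>m\<in>G. (if m = g then f m else 0))" by (rule sum.distrib)
  also have "(\<Sum>m\<in>G. (if m = g then f m else 0)) = f g" using assms by (simp add: sum.delta)
  finally show ?thesis .
qed

lemma sum_delta_add1:
  fixes c :: "'a \<Rightarrow> nat"
  assumes "finite G" "g \<in> G"
  shows "(\<Sum>m\<in>G. c m + (if m = g then 1 else 0)) = (\<Sum>m\<in>G. c m) + 1"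
  using sum_delta_add[OF assms, of c "\<lambda>_. 1"] by simp

lemma spow_count:
  fixes G :: "('v \<Rightarrow>\<^sub>0 nat) set"
  assumes "finite G"
  shows "spow G k = {p. \<exists>c. (\<Sum>m\<in>G. c m) = k \<and> (\<forall>v. lkp p v = (\<Sum>m\<in>G. c m * lkp m v))}"
proof (induction k)
  case 0
  show ?case
  proof (intro Set.set_eqI iffI)
    fix p :: "'v \<Rightarrow>\<^sub>0 nat" assume "p \<in> spow G 0"
    then have "p = 0" by simp
    then show "p \<in> {p. \<exists>c. (\<Sum>m\<in>G. c m) = 0 \<and> (\<forall>v. lkp p v = (\<Sum>m\<in>G. c m * lkp m v))}"
      by (intro CollectI exI[of _ "\<lambda>_. 0"]) simp
  next
    fix p :: "'v \<Rightarrow>\<^sub>0 nat" assume "p \<in> {p. \<exists>c. (\<Sum>m\<in>G. c m) = 0 \<and> (\<forall>v. lkp p v = (\<Sum>m\<in>G. c m * lkp m v))}"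
    then obtain c where c: "(\<Sum>m\<in>G. c m) = 0" "\<forall>v. lkp p v = (\<Sum>m\<in>G. c m * lkp m v)" by blast
    then have "\<forall>m\<in>G. c m = 0" using assms by simp
    then have "\<forall>v. lkp p v = 0" using c(2) by simp
    then show "p \<in> spow G 0" by (simp add: poly_mapping_eqI)
  qed
next
  case (Suc k)
  show ?case
  proof (intro Set.set_eqI iffI)
    fix p assume "p \<in> spow G (Suc k)"
    then obtain g q where gq: "g \<in> G" "q \<in> spow G k" "p = g + q" by (auto simp: ssum_def)
    then obtain c where c: "(\<Sum>m\<in>G. c m) = k" "\<forall>v. lkp q v = (\<Sum>m\<in>G. c m * lkp m v)" using Suc by auto
    define c' where "c' m = c m + (if m = g then 1 else 0)" for m
    have "(\<Sum>m\<in>G. c' m) = Suc k" unfolding c'_def using sum_delta_add1[OF assms gq(1), of c] c by simp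
    moreover have "\<forall>v. lkp p v = (\<Sum>m\<in>G. c' m * lkp m v)"
      unfolding c'_def using sum_delta_add[OF assms gq(1), of c] c gq by (simp add: lookup_add)
    ultimately show "p \<in> {p. \<exists>c. (\<Sum>m\<in>G. c m) = Suc k \<and> (\<forall>v. lkp p v = (\<Sum>m\<in>G. c m * lkp m v))}" by blast
  next
    fix p :: "'v \<Rightarrow>\<^sub>0 nat" assume "p \<in> {p. \<exists>c. (\<Sum>m\<in>G. c m) = Suc k \<and> (\<forall>v. lkp p v = (\<Sum>m\<in>G. c m * lkp m v))}"
    then obtain c where c: "(\<Sum>m\<in>G. c m) = Suc k" "\<forall>v. lkp p v = (\<Sum>m\<in>G. c m * lkp m v)" by blast
    obtain g where g: "g \<in> G" "c g > 0"
    proof (rule ccontr)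
      assume "\<not> thesis"
      then have "\<forall>m\<in>G. c m = 0" using that by auto
      then show False using c(1) by simp
    qed
    define c' where "c' m = (if m = g then c m - 1 else c m)" for m
    have cc: "c = (\<lambda>m. c' m + (if m = g then 1 else 0))" using g by (auto simp: c'_def)
    have s1: "(\<Sum>m\<in>G. c' m) = k" using c(1) sum_delta_add1[OF assms g(1), of c'] unfolding cc by simp
    have s2: "lkp p v = (\<Sum>m\<in>G. c' m * lkp m v) + lkp g v" for v
      using c(2) sum_delta_add[OF assms g(1), of c'] unfolding cc by simp
    define q where "q = p - g"
    have pq: "p = g + q" unfolding q_def by (rule pm_le_split) (simp add: s2)
    have "lkp q v = (\<Sum>m\<in>G. c' m * lkp m v)" for v unfolding q_def by (simp add: lookup_minus s2)
    then have "q \<in> spow G k" using Suc s1 by auto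
    then show "p \<in> spow G (Suc k)" using pq g by (auto simp: ssum_def)
  qed
qed

datatype ('i, 'j, 'v) ix = N 'i | Av 'v | C 'j 'i "'v \<Rightarrow>\<^sub>0 nat" | D 'j 'v

definition Eset :: "('i::finite \<Rightarrow> 'j \<Rightarrow> ('v \<Rightarrow>\<^sub>0 nat) set) \<Rightarrow> 'j \<Rightarrow> ('i \<Rightarrow>\<^sub>0 nat) \<Rightarrow> ('v \<Rightarrow>\<^sub>0 nat) set" where
  "Eset G j n = upc (sprod (\<lambda>i. spow (G i j) (lkp n i)) UNIV)"

definition Sset :: "('i::finite \<Rightarrow> 'j \<Rightarrow> ('v \<Rightarrow>\<^sub>0 nat) set) \<Rightarrow> (('i \<Rightarrow>\<^sub>0 nat) \<times> ('v \<Rightarrow>\<^sub>0 nat)) set" where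
  "Sset G = {(n, a). \<forall>j. a \<in> Eset G j n}"

definition Kset :: "('i \<Rightarrow> 'j \<Rightarrow> ('v \<Rightarrow>\<^sub>0 nat) set) \<Rightarrow> ('i, 'j, 'v) ix set" where
  "Kset G = range N \<union> range Av \<union> (\<Union>j i. C j i ` G i j) \<union> range (\<lambda>(j, v). D j v)"

definition Tset :: "('i::finite \<Rightarrow> 'j \<Rightarrow> ('v \<Rightarrow>\<^sub>0 nat) set) \<Rightarrow> (('i, 'j, 'v) ix \<Rightarrow> nat) set" where
  "Tset G = {t. (\<forall>x. x \<notin> Kset G \<longrightarrow> t x = 0) \<and> (\<forall>j i. (\<Sum>m\<in>G i j. t (C j i m)) = t (N i)) \<and>
     (\<forall>j v. t (Av v) = (\<Sum>i\<in>UNIV. \<Sum>m\<in>G i j. t (C j i m) * lkp m v) + t (D j v))}"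

definition pr :: "(('i::finite, 'j, 'v::finite) ix \<Rightarrow> nat) \<Rightarrow> ('i \<Rightarrow>\<^sub>0 nat) \<times> ('v \<Rightarrow>\<^sub>0 nat)" where
  "pr t = (Abs_poly_mapping (\<lambda>i. t (N i)), Abs_poly_mapping (\<lambda>v. t (Av v)))"

lemma lkp_Abs_fin [simp]: "lkp (Abs_poly_mapping (f :: 'a::finite \<Rightarrow> nat)) = f"
  by (simp add: lookup_Abs_poly_mapping)

lemma Kset_finite:
  assumes "\<And>i j. finite (G i j)"
  shows "finite (Kset (G :: 'i::finite \<Rightarrow> 'j::finite \<Rightarrow> ('v::finite \<Rightarrow>\<^sub>0 nat) set))"
  unfolding Kset_def using assms by auto

lemma pr_add: "pr (t + t') = pr t + pr t'"
  unfolding pr_def by (auto intro!: poly_mapping_eqI simp: lookup_add)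

lemma T_add:
  fixes G :: "'i::finite \<Rightarrow> 'j \<Rightarrow> ('v \<Rightarrow>\<^sub>0 nat) set"
  assumes "t \<in> Tset G" "t' \<in> Tset G" shows "t + t' \<in> Tset G"
proof -
  have t: "\<forall>x. x \<notin> Kset G \<longrightarrow> t x = 0" "\<And>j i. (\<Sum>m\<in>G i j. t (C j i m)) = t (N i)"
     "\<And>j v. t (Av v) = (\<Sum>i\<in>UNIV. \<Sum>m\<in>G i j. t (C j i m) * lkp m v) + t (D j v)"
    using assms(1) unfolding Tset_def by auto
  have t': "\<forall>x. x \<notin> Kset G \<longrightarrow> t' x = 0" "\<And>j i. (\<Sum>m\<in>G i j. t' (C j i m)) = t' (N i)"
     "\<And>j v. t' (Av v) = (\<Sum>i\<in>UNIV. \<Sum>m\<in>G i j. t' (C j i m) * lkp m v) + t' (D j v)"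
    using assms(2) unfolding Tset_def by auto
  have "(\<Sum>m\<in>G i j. (t + t') (C j i m)) = (t + t') (N i)" for i j
    using t(2)[where j=j and i=i] t'(2)[where j=j and i=i] by (simp add: sum.distrib)
  moreover have "(t + t') (Av v) = (\<Sum>i\<in>UNIV. \<Sum>m\<in>G i j. (t + t') (C j i m) * lkp m v) + (t + t') (D j v)" for j v
  proof -
    have "(\<Sum>i\<in>UNIV. \<Sum>m\<in>G i j. (t + t') (C j i m) * lkp m v) =
      (\<Sum>i\<in>UNIV. \<Sum>m\<in>G i j. t (C j i m) * lkp m v) + (\<Sum>i\<in>UNIV. \<Sum>m\<in>G i j. t' (C j i m) * lkp m v)"
      by (simp add: sum.distrib distrib_right)
    then show ?thesis using t(3)[where j=j and v=v] t'(3)[where j=j and v=v] by simp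
  qed
  moreover have "\<forall>x. x \<notin> Kset G \<longrightarrow> (t + t') x = 0" using t(1) t'(1) by simp
  ultimately show ?thesis unfolding Tset_def by blast
qed

lemma sum_diff_nat:
  fixes f g :: "'a \<Rightarrow> nat"
  assumes "\<And>x. g x \<le> f x"
  shows "(\<Sum>x\<in>A. f x - g x) = (\<Sum>x\<in>A. f x) - (\<Sum>x\<in>A. g x)"
  using assms by (simp add: sum_subtractf_nat)

lemma sum_le_nat:
  fixes f g :: "'a \<Rightarrow> nat"
  assumes "\<And>x. g x \<le> f x"
  shows "(\<Sum>x\<in>A. g x) \<le> (\<Sum>x\<in>A. f x)"
  using assms by (simp add: sum_mono)

lemma T_diff:
  fixes G :: "'i::finite \<Rightarrow> 'j \<Rightarrow> ('v \<Rightarrow>\<^sub>0 nat) set"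
  assumes "t \<in> Tset G" "t' \<in> Tset G" "\<And>x. t' x \<le> t x" shows "t - t' \<in> Tset G"
proof -
  have t: "\<forall>x. x \<notin> Kset G \<longrightarrow> t x = 0" "\<And>j i. (\<Sum>m\<in>G i j. t (C j i m)) = t (N i)"
     "\<And>j v. t (Av v) = (\<Sum>i\<in>UNIV. \<Sum>m\<in>G i j. t (C j i m) * lkp m v) + t (D j v)"
    using assms(1) unfolding Tset_def by auto
  have t': "\<forall>x. x \<notin> Kset G \<longrightarrow> t' x = 0" "\<And>j i. (\<Sum>m\<in>G i j. t' (C j i m)) = t' (N i)"
     "\<And>j v. t' (Av v) = (\<Sum>i\<in>UNIV. \<Sum>m\<in>G i j. t' (C j i m) * lkp m v) + t' (D j v)"
    using assms(2) unfolding Tset_def by auto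
  have le: "t' x \<le> t x" for x by (rule assms(3))
  have "(\<Sum>m\<in>G i j. t (C j i m) - t' (C j i m)) = t (N i) - t' (N i)" for i j
    using t(2)[where j=j and i=i] t'(2)[where j=j and i=i] le by (simp add: sum_diff_nat)
  moreover have "t (Av v) - t' (Av v) = (\<Sum>i\<in>UNIV. \<Sum>m\<in>G i j. (t (C j i m) - t' (C j i m)) * lkp m v) + (t (D j v) - t' (D j v))" for j v
  proof -
    let ?X = "\<lambda>t. (\<Sum>i\<in>UNIV. \<Sum>m\<in>G i j. t (C j i m) * lkp m v)"
    have "(\<Sum>i\<in>UNIV. \<Sum>m\<in>G i j. (t (C j i m) - t' (C j i m)) * lkp m v) =
          (\<Sum>i\<in>UNIV. (\<Sum>m\<in>G i j. t (C j i m) * lkp m v) - (\<Sum>m\<in>G i j. t' (C j i m) * lkp m v))"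
      by (rule sum.cong[OF refl], subst sum_diff_nat[symmetric]) (auto simp: diff_mult_distrib le mult_le_mono1)
    also have "\<dots> = ?X t - ?X t'"
      by (rule sum_diff_nat) (auto intro!: sum_mono mult_le_mono1 le)
    finally have "(\<Sum>i\<in>UNIV. \<Sum>m\<in>G i j. (t (C j i m) - t' (C j i m)) * lkp m v) = ?X t - ?X t'" .
    moreover have "?X t' \<le> ?X t" by (auto intro!: sum_mono mult_le_mono1 le)
    moreover have "t' (D j v) \<le> t (D j v)" by (rule le)
    ultimately show ?thesis using t(3)[where j=j and v=v] t'(3)[where j=j and v=v] by simp
  qed
  moreover have "\<forall>x. x \<notin> Kset G \<longrightarrow> (t - t') x = 0" using t(1) t'(1) by simp
  ultimately show ?thesis unfolding Tset_def by simp
qed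

lemma T_zero: "(0 :: ('i::finite, 'j, 'v) ix \<Rightarrow> nat) \<in> Tset G"
  unfolding Tset_def by simp

lemma pr_in_S:
  assumes fin: "\<And>i j. finite (G i j)" and t: "t \<in> Tset G"
  shows "pr t \<in> Sset (G :: 'i::finite \<Rightarrow> 'j \<Rightarrow> ('v::finite \<Rightarrow>\<^sub>0 nat) set)"
proof -
  have t2: "\<And>j i. (\<Sum>m\<in>G i j. t (C j i m)) = t (N i)"
     and t3: "\<And>j v. t (Av v) = (\<Sum>i\<in>UNIV. \<Sum>m\<in>G i j. t (C j i m) * lkp m v) + t (D j v)"
    using t unfolding Tset_def by auto
  define n :: "'i \<Rightarrow>\<^sub>0 nat" where "n = Abs_poly_mapping (\<lambda>i. t (N i))"
  define a :: "'v \<Rightarrow>\<^sub>0 nat" where "a = Abs_poly_mapping (\<lambda>v. t (Av v))"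
  have "a \<in> Eset G j n" for j
  proof -
    define x :: "'i \<Rightarrow> 'v \<Rightarrow>\<^sub>0 nat" where "x i = Abs_poly_mapping (\<lambda>v. \<Sum>m\<in>G i j. t (C j i m) * lkp m v)" for i
    define d :: "'v \<Rightarrow>\<^sub>0 nat" where "d = Abs_poly_mapping (\<lambda>v. t (D j v))"
    have "x i \<in> spow (G i j) (lkp n i)" for i
      unfolding spow_count[OF fin] n_def x_def using t2[of j i] by auto
    then have "(\<Sum>i\<in>UNIV. x i) \<in> sprod (\<lambda>i. spow (G i j) (lkp n i)) UNIV"
      unfolding sprod_def by blast
    moreover have "a = (\<Sum>i\<in>UNIV. x i) + d"
      by (rule poly_mapping_eqI) (simp add: a_def x_def d_def lookup_add lookup_sum t3[of _ j])
    ultimately show ?thesis unfolding Eset_def upc_def by blast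
  qed
  then show ?thesis unfolding Sset_def pr_def n_def a_def by auto
qed

lemma S_sub_pr:
  assumes fin: "\<And>i j. finite (G i j)" and s: "s \<in> Sset G"
  shows "s \<in> pr ` Tset (G :: 'i::finite \<Rightarrow> 'j \<Rightarrow> ('v::finite \<Rightarrow>\<^sub>0 nat) set)"
proof -
  obtain n a where s_eq: "s = (n, a)" by (cases s)
  have ex: "\<exists>cd. (\<forall>i. (\<Sum>m\<in>G i j. fst cd i m) = lkp n i) \<and> (\<forall>v. lkp a v = (\<Sum>i\<in>UNIV. \<Sum>m\<in>G i j. fst cd i m * lkp m v) + lkp (snd cd) v)" for j
  proof -
    have "a \<in> Eset G j n" using s s_eq unfolding Sset_def by auto
    then obtain p d where pd: "p \<in> sprod (\<lambda>i. spow (G i j) (lkp n i)) UNIV" "a = p + d"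
      unfolding Eset_def upc_def by blast
    from pd(1) obtain x where x: "\<forall>i\<in>UNIV. x i \<in> spow (G i j) (lkp n i)" "p = (\<Sum>i\<in>UNIV. x i)"
      unfolding sprod_def by blast
    have "\<forall>i. \<exists>c. (\<Sum>m\<in>G i j. c m) = lkp n i \<and> (\<forall>v. lkp (x i) v = (\<Sum>m\<in>G i j. c m * lkp m v))"
    proof
      fix i
      have "x i \<in> spow (G i j) (lkp n i)" using x(1) by blast
      then show "\<exists>c. (\<Sum>m\<in>G i j. c m) = lkp n i \<and> (\<forall>v. lkp (x i) v = (\<Sum>m\<in>G i j. c m * lkp m v))"
        unfolding spow_count[OF fin] by (rule CollectD)
    qed
    from choice[OF this] obtain c where c: "\<forall>i. (\<Sum>m\<in>G i j. c i m) = lkp n i \<and> (\<forall>v. lkp (x i) v = (\<Sum>m\<in>G i j. c i m * lkp m v))"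
      by blast
    have "\<forall>v. lkp a v = (\<Sum>i\<in>UNIV. \<Sum>m\<in>G i j. c i m * lkp m v) + lkp d v"
      using c pd(2) x(2) by (simp add: lookup_add lookup_sum)
    then show ?thesis using c by (intro exI[of _ "(c, d)"]) simp
  qed
  have "\<forall>j. \<exists>cd. (\<forall>i. (\<Sum>m\<in>G i j. fst cd i m) = lkp n i) \<and> (\<forall>v. lkp a v = (\<Sum>i\<in>UNIV. \<Sum>m\<in>G i j. fst cd i m * lkp m v) + lkp (snd cd) v)"
    using ex by blast
  from choice[OF this] obtain cd where cd: "\<forall>j. (\<forall>i. (\<Sum>m\<in>G i j. fst (cd j) i m) = lkp n i) \<and> (\<forall>v. lkp a v = (\<Sum>i\<in>UNIV. \<Sum>m\<in>G i j. fst (cd j) i m * lkp m v) + lkp (snd (cd j)) v)"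
    by blast
  define t where "t x = (case x of N i \<Rightarrow> lkp n i | Av v \<Rightarrow> lkp a v
     | C j i m \<Rightarrow> (if m \<in> G i j then fst (cd j) i m else 0) | D j v \<Rightarrow> lkp (snd (cd j)) v)" for x
  have tK: "\<forall>x. x \<notin> Kset G \<longrightarrow> t x = 0"
  proof (intro allI impI)
    fix x assume xK: "x \<notin> Kset G"
    show "t x = 0"
    proof (cases x)
      case (C j i m)
      have "m \<in> G i j \<Longrightarrow> C j i m \<in> Kset G" unfolding Kset_def by blast
      then show ?thesis using xK C by (auto simp: t_def)
    qed (use xK in \<open>auto simp: Kset_def\<close>)
  qed
  have t2: "(\<Sum>m\<in>G i j. t (C j i m)) = t (N i)" for j i
  proof -
    have "(\<Sum>m\<in>G i j. t (C j i m)) = (\<Sum>m\<in>G i j. fst (cd j) i m)" by (rule sum.cong) (auto simp: t_def)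
    then show ?thesis using cd by (simp add: t_def)
  qed
  have t3: "t (Av v) = (\<Sum>i\<in>UNIV. \<Sum>m\<in>G i j. t (C j i m) * lkp m v) + t (D j v)" for j v
  proof -
    have "(\<Sum>i\<in>UNIV. \<Sum>m\<in>G i j. t (C j i m) * lkp m v) = (\<Sum>i\<in>UNIV. \<Sum>m\<in>G i j. fst (cd j) i m * lkp m v)"
      by (intro sum.cong refl) (auto simp: t_def)
    then show ?thesis using cd by (simp add: t_def)
  qed
  have "t \<in> Tset G" unfolding Tset_def using tK t2 t3 by blast
  moreover have "pr t = s" unfolding pr_def s_eq t_def by (simp add: lookup_inverse)
  ultimately show ?thesis by blast
qed

lemma S_eq:
  assumes fin: "\<And>i j. finite (G i j)"
  shows "Sset (G :: 'i::finite \<Rightarrow> 'j \<Rightarrow> ('v::finite \<Rightarrow>\<^sub>0 nat) set) = pr ` Tset G"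
proof
  show "Sset G \<subseteq> pr ` Tset G" using S_sub_pr[of G, OF fin] by blast
  show "pr ` Tset G \<subseteq> Sset G" using pr_in_S[of G, OF fin] by blast
qed

lemma S_add:
  assumes fin: "\<And>i j. finite (G i j)"
  shows "s \<in> Sset G \<Longrightarrow> s' \<in> Sset G \<Longrightarrow> s + s' \<in> Sset (G :: 'i::finite \<Rightarrow> 'j \<Rightarrow> ('v::finite \<Rightarrow>\<^sub>0 nat) set)"
proof -
  assume "s \<in> Sset G" "s' \<in> Sset G"
  then obtain t t' where "t \<in> Tset G" "s = pr t" "t' \<in> Tset G" "s' = pr t'" unfolding S_eq[of G, OF fin] by blast
  then have "t + t' \<in> Tset G" "s + s' = pr (t + t')" using T_add pr_add[of t t'] by auto
  then show "s + s' \<in> Sset G" unfolding S_eq[of G, OF fin] by blast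
qed

lemma S_zero:
  assumes fin: "\<And>i j. finite (G i j)"
  shows "0 \<in> Sset (G :: 'i::finite \<Rightarrow> 'j::finite \<Rightarrow> ('v::finite \<Rightarrow>\<^sub>0 nat) set)"
proof -
  have "pr (0 :: ('i, 'j, 'v) ix \<Rightarrow> nat) = 0" unfolding pr_def by (auto intro!: poly_mapping_eqI simp: zero_prod_def)
  then show ?thesis unfolding S_eq[of G, OF fin] using T_zero by (metis image_eqI)
qed

lemma Sideal_fg:
  fixes G :: "'i::finite \<Rightarrow> 'j::finite \<Rightarrow> ('v::finite \<Rightarrow>\<^sub>0 nat) set"
  assumes fin: "\<And>i j. finite (G i j)"
    and E: "E \<subseteq> Sset G" "\<And>e s. e \<in> E \<Longrightarrow> s \<in> Sset G \<Longrightarrow> e + s \<in> E"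
  shows "\<exists>B\<subseteq>E. finite B \<and> (\<forall>e\<in>E. \<exists>b\<in>B. \<exists>s\<in>Sset G. e = b + s)"
proof -
  define DD where "DD = {t \<in> Tset G. pr t \<in> E}"
  obtain D0 where D0: "D0 \<subseteq> DD" "finite D0" "\<forall>f\<in>DD. \<exists>g\<in>D0. \<forall>k\<in>Kset G. g k \<le> f k"
    using dickson[OF Kset_finite[of G, OF fin], of DD] by (elim exE conjE) (rule that)
  have "\<exists>b\<in>pr ` D0. \<exists>s\<in>Sset G. e = b + s" if e: "e \<in> E" for e
  proof -
    have "e \<in> pr ` Tset G" using E(1) e S_eq[of G, OF fin] by auto
    then obtain t where t: "t \<in> Tset G" "e = pr t" by blast
    then have "t \<in> DD" unfolding DD_def using e by auto
    then obtain g where g: "g \<in> D0" "\<forall>k\<in>Kset G. g k \<le> t k" using D0 by blast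
    have gT: "g \<in> Tset G" using g D0 unfolding DD_def by auto
    have le: "g x \<le> t x" for x
    proof (cases "x \<in> Kset G")
      case True then show ?thesis using g by auto
    next
      case False then show ?thesis using gT unfolding Tset_def by auto
    qed
    have tt: "t = g + (t - g)" using le by (auto simp: fun_eq_iff)
    have "t - g \<in> Tset G" by (rule T_diff[OF t(1) gT le])
    then have "pr (t - g) \<in> Sset G" using S_eq[of G, OF fin] by auto
    moreover have "e = pr g + pr (t - g)" using t(2) tt pr_add[of g "t - g"] by simp
    ultimately show ?thesis using g by blast
  qed
  moreover have "pr ` D0 \<subseteq> E" using D0 unfolding DD_def by auto
  ultimately show ?thesis using D0(2) by (intro exI[of _ "pr ` D0"] conjI) auto
qed

definition cs :: "'a::finite list" where "cs = (SOME l. set l = UNIV)"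

lemma set_cs: "set (cs :: 'a::finite list) = UNIV"
  unfolding cs_def using finite_list[of "UNIV :: 'a set"] by (rule someI_ex[of "\<lambda>l. set l = UNIV"]) (use finite_list in auto)

definition lexlt :: "('a::finite \<Rightarrow> nat) \<Rightarrow> ('a \<Rightarrow> nat) \<Rightarrow> bool" where
  "lexlt u w \<longleftrightarrow> (\<exists>k<length (cs::'a list). u (cs!k) < w (cs!k) \<and> (\<forall>i<k. u (cs!i) = w (cs!i)))"

lemma lexlt_add: "lexlt u w \<Longrightarrow> lexlt (\<lambda>y. u y + s y) (\<lambda>y. w y + s y)"
  unfolding lexlt_def by auto

lemma lexlt_irrefl: "\<not> lexlt u u"
  unfolding lexlt_def by auto

lemma lexlt_trans:
  assumes "lexlt u v" "lexlt v w" shows "lexlt u w"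
proof -
  obtain k1 where k1: "k1 < length (cs::'a list)" "u (cs!k1) < v (cs!k1)" "\<forall>i<k1. u (cs!i) = v (cs!i)"
    using assms(1) unfolding lexlt_def by blast
  obtain k2 where k2: "k2 < length (cs::'a list)" "v (cs!k2) < w (cs!k2)" "\<forall>i<k2. v (cs!i) = w (cs!i)"
    using assms(2) unfolding lexlt_def by blast
  show ?thesis unfolding lexlt_def
  proof (cases k1 k2 rule: linorder_cases)
    case less then show "\<exists>k<length (cs::'a list). u (cs!k) < w (cs!k) \<and> (\<forall>i<k. u (cs!i) = w (cs!i))"
      using k1 k2 by (intro exI[of _ k1]) auto
  next
    case equal then show "\<exists>k<length (cs::'a list). u (cs!k) < w (cs!k) \<and> (\<forall>i<k. u (cs!i) = w (cs!i))"
      using k1 k2 by (intro exI[of _ k1]) auto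
  next
    case greater then show "\<exists>k<length (cs::'a list). u (cs!k) < w (cs!k) \<and> (\<forall>i<k. u (cs!i) = w (cs!i))"
      using k1 k2 by (intro exI[of _ k2]) auto
  qed
qed

lemma lexlt_total:
  assumes "u \<noteq> w" shows "lexlt u w \<or> lexlt w u"
proof -
  obtain y where "u y \<noteq> w y" using assms by auto
  moreover obtain k where "k < length (cs::'a list)" "cs!k = y" using set_cs[where 'a='a]
    by (metis UNIV_I in_set_conv_nth)
  ultimately have "\<exists>k. k < length (cs::'a list) \<and> u (cs!k) \<noteq> w (cs!k)" by blast
  then obtain k where k: "k < length (cs::'a list)" "u (cs!k) \<noteq> w (cs!k)"
    and min: "\<forall>i<k. \<not> (i < length (cs::'a list) \<and> u (cs!i) \<noteq> w (cs!i))"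
    using exists_least_iff[of "\<lambda>k. k < length (cs::'a list) \<and> u (cs!k) \<noteq> w (cs!k)"] by blast
  have eq: "\<forall>i<k. u (cs!i) = w (cs!i)" using min k(1) by auto
  show ?thesis
  proof (cases "u (cs!k) < w (cs!k)")
    case True then show ?thesis using k eq unfolding lexlt_def by blast
  next
    case False then have "w (cs!k) < u (cs!k)" using k by simp
    then show ?thesis using k eq unfolding lexlt_def by (metis)
  qed
qed

lemma wf_lexlt: "wf {(u, w). lexlt u (w :: 'a::finite \<Rightarrow> nat)}"
proof (rule wf_subset)
  show "wf (inv_image (lex less_than) (\<lambda>u. map u (cs::'a list)))" by (intro wf_inv_image wf_lex wf_less_than)
  show "{(u, w). lexlt u w} \<subseteq> inv_image (lex less_than) (\<lambda>u. map u (cs::'a list))"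
  proof safe
    fix u w :: "'a \<Rightarrow> nat" assume "lexlt u w"
    then obtain k where k: "k < length (cs::'a list)" "u (cs!k) < w (cs!k)" "\<forall>i<k. u (cs!i) = w (cs!i)"
      unfolding lexlt_def by blast
    have tk: "take k (map u cs) = take k (map w (cs::'a list))"
      using k by (intro nth_equalityI) auto
    have hu: "map u cs = take k (map u cs) @ u (cs!k) # drop (Suc k) (map u (cs::'a list))"
      using k(1) id_take_nth_drop[of k "map u cs"] by simp
    have hw: "map w cs = take k (map u cs) @ w (cs!k) # drop (Suc k) (map w (cs::'a list))"
      using k(1) id_take_nth_drop[of k "map w cs"] tk by simp
    have "(map u cs, map w (cs::'a list)) \<in> lex less_than"
      unfolding lex_conv mem_Collect_eq case_prod_conv
      by (intro conjI exI[of _ "take k (map u cs)"] exI[of _ "u (cs!k)"] exI[of _ "w (cs!k)"]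
          exI[of _ "drop (Suc k) (map u cs)"] exI[of _ "drop (Suc k) (map w cs)"])
         (use hu hw k(2) in simp_all)
    then show "(u, w) \<in> inv_image (lex less_than) (\<lambda>u. map u (cs::'a list))"
      unfolding inv_image_def by simp
  qed
qed

type_synonym ('i, 'v) ex = "('i \<Rightarrow>\<^sub>0 nat) \<times> ('v \<Rightarrow>\<^sub>0 nat)"

definition vec :: "('i, 'v) ex \<Rightarrow> ('i + 'v) \<Rightarrow> nat" where
  "vec e y = (case y of Inl i \<Rightarrow> lkp (fst e) i | Inr v \<Rightarrow> lkp (snd e) v)"

lemma vec_inj: "vec e = vec e' \<Longrightarrow> e = e'"
proof -
  assume h: "vec e = vec e'"
  have "lkp (fst e) i = lkp (fst e') i" for i using fun_cong[OF h, of "Inl i"] by (simp add: vec_def)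
  moreover have "lkp (snd e) v = lkp (snd e') v" for v using fun_cong[OF h, of "Inr v"] by (simp add: vec_def)
  ultimately show "e = e'" by (metis poly_mapping_eqI prod.expand)
qed

lemma vec_add: "vec (e + e') = (\<lambda>y. vec e y + vec e' y)"
  by (auto simp: vec_def fun_eq_iff lookup_add split: sum.splits)

definition elt :: "('i::finite, 'v::finite) ex \<Rightarrow> ('i, 'v) ex \<Rightarrow> bool" where
  "elt e e' \<longleftrightarrow> lexlt (vec e) (vec e')"

lemma elt_irrefl: "\<not> elt e e" unfolding elt_def by (rule lexlt_irrefl)
lemma elt_trans: "elt a b \<Longrightarrow> elt b c \<Longrightarrow> elt a c" unfolding elt_def by (rule lexlt_trans)
lemma elt_total: "a \<noteq> b \<Longrightarrow> elt a b \<or> elt b a" unfolding elt_def using vec_inj lexlt_total by metis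
lemma elt_add: "elt a b \<Longrightarrow> elt (a + s) (b + s)" unfolding elt_def vec_add by (rule lexlt_add)
lemma wf_elt: "wf {(a, b). elt a (b :: ('i::finite, 'v::finite) ex)}"
proof -
  have "{(a, b). elt a (b :: ('i, 'v) ex)} = inv_image {(u, w). lexlt u w} vec"
    unfolding elt_def inv_image_def by auto
  then show ?thesis using wf_inv_image[OF wf_lexlt] by simp
qed

lemma elt_max:
  assumes "finite X" "X \<noteq> {}"
  shows "\<exists>e\<in>X. \<forall>e'\<in>X. e' = e \<or> elt e' (e :: ('i::finite, 'v::finite) ex)"
  using assms
proof (induction X rule: finite_ne_induct)
  case (singleton x) then show ?case by auto
next
  case (insert x F)
  then obtain e where e: "e \<in> F" "\<forall>e'\<in>F. e' = e \<or> elt e' e" by blast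
  show ?case
  proof (cases "elt e x")
    case True
    have "\<forall>e'\<in>insert x F. e' = x \<or> elt e' x"
    proof
      fix e' assume "e' \<in> insert x F"
      then show "e' = x \<or> elt e' x" using e True elt_trans[of e' e x] by (cases "e' = e") auto
    qed
    then show ?thesis by blast
  next
    case False
    then have "x = e \<or> elt x e" using elt_total by blast
    then have "\<forall>e'\<in>insert x F. e' = e \<or> elt e' e" using e by blast
    then show ?thesis using e by blast
  qed
qed

lemma lookup_mult_single:
  fixes f :: "'a::cancel_comm_monoid_add \<Rightarrow>\<^sub>0 'b::comm_semiring_1"
  shows "lkp (f * Poly_Mapping.single k c) (d + k) = lkp f d * c"
proof -
  have "lkp (f * Poly_Mapping.single k c) (d + k) = (\<Sum>l. lkp f l * (\<Sum>q. (c when k = q) when d + k = l + q))"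
    by (simp add: lookup_mult lookup_single)
  also have "\<dots> = (\<Sum>l. lkp f l * c when l = d)"
  proof (rule Sum_any.cong)
    fix l
    have "(\<Sum>q. (c when k = q) when d + k = l + q) = (\<Sum>q. (c when d + k = l + k) when k = q)"
      by (rule Sum_any.cong) (auto simp: when_def)
    also have "\<dots> = (c when l = d)" by (simp add: when_def)
    finally show "lkp f l * (\<Sum>q. (c when k = q) when d + k = l + q) = (lkp f l * c when l = d)"
      by (simp add: when_def)
  qed
  finally show ?thesis by simp
qed

lemma keys_mult_single:
  fixes f :: "'a::cancel_comm_monoid_add \<Rightarrow>\<^sub>0 'b::comm_semiring_1"
  assumes "x \<in> kys (f * Poly_Mapping.single k c)"
  shows "\<exists>d\<in>kys f. x = d + k"
proof -
  from keys_mult[of f "Poly_Mapping.single k c"] assms obtain a b where "x = a + b" "a \<in> kys f" "b \<in> kys (Poly_Mapping.single k c)"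
    by blast
  then show ?thesis by (auto split: if_splits)
qed

definition co :: "('n \<Rightarrow>\<^sub>0 ('a \<Rightarrow>\<^sub>0 'k::zero)) \<Rightarrow> 'n \<times> 'a \<Rightarrow> 'k" where
  "co f e = lkp (lkp f (fst e)) (snd e)"

definition supp :: "('n \<Rightarrow>\<^sub>0 ('a \<Rightarrow>\<^sub>0 'k::zero)) \<Rightarrow> ('n \<times> 'a) set" where
  "supp f = {e. co f e \<noteq> 0}"

definition mon :: "'n \<times> 'a \<Rightarrow> 'k::zero \<Rightarrow> ('n \<Rightarrow>\<^sub>0 ('a \<Rightarrow>\<^sub>0 'k))" where
  "mon e c = Poly_Mapping.single (fst e) (Poly_Mapping.single (snd e) c)"

lemma co_add: "co (f + g) e = co f e + co g e" unfolding co_def by (simp add: lookup_add)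
lemma co_diff: "co (f - g) e = co f e - (co g e :: 'k::ab_group_add)" unfolding co_def by (simp add: lookup_minus)
lemma co_uminus: "co (- f) e = - (co f e :: 'k::ab_group_add)" unfolding co_def by simp
lemma co_zero [simp]: "co 0 e = 0" unfolding co_def by simp
lemma co_mon: "co (mon e c) e' = (if e' = e then c else 0)"
  unfolding co_def mon_def by (cases e; cases e') (auto simp: lookup_single when_def)
lemma co_sum: "co (sum f X) e = (\<Sum>x\<in>X. co (f x) e)"
  unfolding co_def by (simp add: lookup_sum)

lemma co_eq: "(\<And>e. co f e = co g e) \<Longrightarrow> f = g"
  unfolding co_def by (metis fst_conv snd_conv poly_mapping_eqI)

lemma finite_supp: "finite (supp f)"
proof (rule finite_subset)
  show "supp f \<subseteq> Sigma (kys f) (\<lambda>n. kys (lkp f n))"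
    unfolding supp_def co_def by (auto simp: in_keys_iff)
  show "finite (Sigma (kys f) (\<lambda>n. kys (lkp f n)))" by auto
qed

lemma supp_empty: "supp f = {} \<Longrightarrow> f = 0"
  by (rule co_eq) (auto simp: supp_def)

lemma mon_decomp: "f = (\<Sum>e\<in>supp f. mon e (co f e))"
proof (rule co_eq)
  fix x
  have "co (\<Sum>e\<in>supp f. mon e (co f e)) x = (\<Sum>e\<in>supp f. if x = e then co f e else 0)"
    by (simp add: co_sum co_mon)
  also have "\<dots> = co f x" using finite_supp[of f] by (simp add: sum.delta supp_def)
  finally show "co f x = co (\<Sum>e\<in>supp f. mon e (co f e)) x" by simp
qed

lemma mon_mult: "mon e c * mon e' c' = mon (e + e') (c * c' :: 'k::comm_ring_1)"
  unfolding mon_def by (simp add: mult_single)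

lemma mon_zero [simp]: "mon e 0 = 0" unfolding mon_def by simp

lemma co_mult_mon:
  fixes f :: "('n::cancel_comm_monoid_add \<Rightarrow>\<^sub>0 ('a::cancel_comm_monoid_add \<Rightarrow>\<^sub>0 'k::comm_ring_1))"
  shows "co (f * mon s c) (e + s) = co f e * c"
  unfolding co_def mon_def by (simp add: lookup_mult_single)

lemma supp_mult_mon:
  fixes f :: "('n::cancel_comm_monoid_add \<Rightarrow>\<^sub>0 ('a::cancel_comm_monoid_add \<Rightarrow>\<^sub>0 'k::comm_ring_1))"
  assumes "x \<in> supp (f * mon s c)"
  shows "\<exists>e\<in>supp f. x = e + s"
proof -
  obtain n a where x: "x = (n, a)" by (cases x)
  obtain n0 a0 where s: "s = (n0, a0)" by (cases s)
  have "lkp (lkp (f * mon s c) n) a \<noteq> 0" using assms x unfolding supp_def co_def by simp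
  then have "n \<in> kys (f * Poly_Mapping.single n0 (Poly_Mapping.single a0 c))"
    unfolding mon_def s by (auto simp: in_keys_iff)
  then obtain n1 where n1: "n = n1 + n0" using keys_mult_single by blast
  have "lkp (lkp f n1 * Poly_Mapping.single a0 c) a \<noteq> 0"
    using \<open>lkp (lkp (f * mon s c) n) a \<noteq> 0\<close> unfolding n1 mon_def s by (simp add: lookup_mult_single)
  then have "a \<in> kys (lkp f n1 * Poly_Mapping.single a0 c)" by (simp add: in_keys_iff)
  then obtain a1 where a1: "a1 \<in> kys (lkp f n1)" "a = a1 + a0" using keys_mult_single by blast
  have "(n1, a1) \<in> supp f" using a1 unfolding supp_def co_def by (simp add: in_keys_iff)
  moreover have "x = (n1, a1) + s" using x s n1 a1 by simp
  ultimately show ?thesis by blast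
qed

lemma co_mult_cst:
  fixes f :: "('n::cancel_comm_monoid_add \<Rightarrow>\<^sub>0 ('a::cancel_comm_monoid_add \<Rightarrow>\<^sub>0 'k::comm_ring_1))"
  shows "co (f * mon 0 c) e = co f e * c"
  using co_mult_mon[of f 0 c e] by simp

type_synonym ('i, 'v, 'k) PP = "('i \<Rightarrow>\<^sub>0 nat) \<Rightarrow>\<^sub>0 (('v \<Rightarrow>\<^sub>0 nat) \<Rightarrow>\<^sub>0 'k)"

definition ismax :: "('i::finite, 'v::finite) ex \<Rightarrow> ('i, 'v) ex set \<Rightarrow> bool" where
  "ismax e X \<longleftrightarrow> e \<in> X \<and> (\<forall>e'\<in>X. e' = e \<or> elt e' e)"

definition LE :: "('i::finite, 'v::finite, 'k::field) PP set \<Rightarrow> ('i, 'v) ex set" where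
  "LE I = {e. \<exists>f\<in>I. ismax e (supp f)}"

lemma exists_max_supp:
  fixes f :: "('i::finite, 'v::finite, 'k::field) PP"
  assumes "f \<noteq> 0" shows "\<exists>e. ismax e (supp f)"
proof -
  have "supp f \<noteq> {}" using assms supp_empty by blast
  then show ?thesis using elt_max[OF finite_supp] unfolding ismax_def by blast
qed

lemma lt_inclusion:
  fixes I J :: "('i::finite, 'v::finite, 'k::field) PP set"
  assumes IJ: "I \<subseteq> J"
    and Jc: "\<And>f g c. f \<in> J \<Longrightarrow> g \<in> I \<Longrightarrow> f - g * mon 0 c \<in> J"
    and Ic: "\<And>h g c. h \<in> I \<Longrightarrow> g \<in> I \<Longrightarrow> h + g * mon 0 c \<in> I"
    and I0: "0 \<in> I"
    and LEs: "LE J \<subseteq> LE I"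
  shows "J \<subseteq> I"
proof -
  have claim: "\<forall>f\<in>J. supp f \<subseteq> {e'. e' = e \<or> elt e' e} \<longrightarrow> f \<in> I" for e
  proof (induction e rule: wf_induct_rule[OF wf_elt])
    case (1 e)
    have A: "h \<in> I" if h: "h \<in> J" "supp h \<subseteq> {e'. elt e' e}" for h
    proof (cases "h = 0")
      case True then show ?thesis using I0 by simp
    next
      case False
      then obtain e'' where e'': "ismax e'' (supp h)" using exists_max_supp by blast
      then have "elt e'' e" using h unfolding ismax_def by blast
      moreover have "supp h \<subseteq> {e'. e' = e'' \<or> elt e' e''}" using e'' unfolding ismax_def by blast
      ultimately show ?thesis using 1 h(1) by blast
    qed
    show ?case
    proof (intro ballI impI)
      fix f assume f: "f \<in> J" "supp f \<subseteq> {e'. e' = e \<or> elt e' e}"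
      show "f \<in> I"
      proof (cases "co f e = 0")
        case True
        then have "supp f \<subseteq> {e'. elt e' e}" using f(2) unfolding supp_def by auto
        then show ?thesis using A f(1) by blast
      next
        case False
        then have "ismax e (supp f)" using f(2) unfolding ismax_def supp_def by auto
        then have "e \<in> LE J" using f(1) unfolding LE_def by blast
        then have "e \<in> LE I" using LEs by blast
        then obtain g where g: "g \<in> I" "ismax e (supp g)" unfolding LE_def by blast
        have cg: "co g e \<noteq> 0" using g(2) unfolding ismax_def supp_def by auto
        define c where "c = co f e / co g e"
        define h where "h = f - g * mon 0 c"
        have hJ: "h \<in> J" unfolding h_def using Jc f(1) g(1) by blast
        have coh: "co h x = co f x - co g x * c" for x unfolding h_def by (simp add: co_diff co_mult_cst)
        have "supp h \<subseteq> {e'. elt e' e}"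
        proof
          fix x assume x: "x \<in> supp h"
          show "x \<in> {e'. elt e' e}"
          proof (cases "x = e")
            case True
            then have "co h x = 0" using cg by (simp add: coh c_def)
            then show ?thesis using x unfolding supp_def by simp
          next
            case False
            show ?thesis
            proof (rule ccontr)
              assume "x \<notin> {e'. elt e' e}"
              then have ex: "elt e x" using elt_total False by blast
              have "x \<notin> supp f"
              proof
                assume "x \<in> supp f"
                then have "x = e \<or> elt x e" using f(2) by blast
                then show False using ex False elt_irrefl elt_trans by blast
              qed
              moreover have "x \<notin> supp g"
              proof
                assume "x \<in> supp g"
                then have "x = e \<or> elt x e" using g(2) unfolding ismax_def by blast
                then show False using ex False elt_irrefl elt_trans by blast
              qed
              ultimately have "co h x = 0" unfolding supp_def by (simp add: coh)
              then show False using x unfolding supp_def by simp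
            qed
          qed
        qed
        then have "h \<in> I" using A hJ by blast
        then have "h + g * mon 0 c \<in> I" using Ic g(1) by blast
        then show ?thesis unfolding h_def by simp
      qed
    qed
  qed
  show ?thesis
  proof
    fix f assume f: "f \<in> J"
    show "f \<in> I"
    proof (cases "f = 0")
      case True then show ?thesis using I0 by simp
    next
      case False
      then obtain e where "ismax e (supp f)" using exists_max_supp by blast
      then have "supp f \<subseteq> {e'. e' = e \<or> elt e' e}" unfolding ismax_def by blast
      then show ?thesis using claim f by blast
    qed
  qed
qed

lemma LE_mono: "I \<subseteq> I' \<Longrightarrow> LE I \<subseteq> LE I'"
  unfolding LE_def by blast

lemma LE_shift:
  fixes f :: "('i::finite, 'v::finite, 'k::field) PP"
  assumes "ismax e (supp f)" "f * mon s 1 \<in> I"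
  shows "e + s \<in> LE I"
proof -
  have "co (f * mon s 1) (e + s) = co f e" by (simp add: co_mult_mon)
  then have "e + s \<in> supp (f * mon s 1)" using assms(1) unfolding ismax_def supp_def by auto
  moreover have "\<forall>x\<in>supp (f * mon s 1). x = e + s \<or> elt x (e + s)"
  proof
    fix x assume "x \<in> supp (f * mon s 1)"
    then obtain e' where e': "e' \<in> supp f" "x = e' + s" using supp_mult_mon by blast
    then have "e' = e \<or> elt e' e" using assms(1) unfolding ismax_def by blast
    then show "x = e + s \<or> elt x (e + s)" using e' elt_add by blast
  qed
  ultimately have "ismax (e + s) (supp (f * mon s 1))" unfolding ismax_def by blast
  then show ?thesis using assms(2) unfolding LE_def by blast
qed

lemma supp_add: "supp (f + g) \<subseteq> supp f \<union> supp g"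
  unfolding supp_def by (auto simp: co_add)

lemma supp_uminus: "supp (- f) = supp (f :: ('n \<Rightarrow>\<^sub>0 ('a \<Rightarrow>\<^sub>0 'k::ab_group_add)))"
  unfolding supp_def by (simp add: co_uminus)

lemma supp_zero [simp]: "supp 0 = {}" unfolding supp_def by simp

lemma supp_mon: "supp (mon e c) \<subseteq> {e}"
  unfolding supp_def by (auto simp: co_mon split: if_splits)

lemma one_mon: "(1 :: ('n::comm_monoid_add \<Rightarrow>\<^sub>0 ('a::comm_monoid_add \<Rightarrow>\<^sub>0 'k::comm_ring_1))) = mon 0 1"
  unfolding mon_def by simp

context
  fixes S :: "('i::finite, 'v::finite) ex set"
  assumes S0: "0 \<in> S" and Sadd: "\<And>s s'. s \<in> S \<Longrightarrow> s' \<in> S \<Longrightarrow> s + s' \<in> S"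
begin

abbreviation AA :: "('i, 'v, 'k::field) PP set" where "AA \<equiv> {f. supp f \<subseteq> S}"

lemma AA_add: "f \<in> AA \<Longrightarrow> g \<in> AA \<Longrightarrow> f + g \<in> AA"
  using supp_add by blast

lemma AA_uminus: "f \<in> AA \<Longrightarrow> - f \<in> AA"
  by (simp add: supp_uminus)

lemma AA_mon: "e \<in> S \<Longrightarrow> mon e c \<in> AA"
  using supp_mon by blast

lemma AA_zero: "0 \<in> AA" by (simp add: supp_def)

lemma AA_one: "1 \<in> AA" unfolding one_mon using AA_mon S0 by blast

lemma AA_sum: "finite X \<Longrightarrow> (\<And>x. x \<in> X \<Longrightarrow> g x \<in> AA) \<Longrightarrow> sum g X \<in> AA"
proof (induction X rule: finite_induct)
  case empty then show ?case using AA_zero by simp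
next
  case (insert x F)
  then have "g x \<in> AA" "sum g F \<in> AA" by auto
  then have "g x + sum g F \<in> AA" by (rule AA_add)
  then show ?case using insert(1,2) by simp
qed

lemma AA_mult:
  assumes f: "f \<in> AA" and g: "g \<in> AA" shows "f * g \<in> AA"
proof -
  have "f * g = (\<Sum>e\<in>supp f. mon e (co f e)) * (\<Sum>e'\<in>supp g. mon e' (co g e'))"
    using mon_decomp[of f] mon_decomp[of g] by simp
  also have "\<dots> = (\<Sum>e\<in>supp f. \<Sum>e'\<in>supp g. mon e (co f e) * mon e' (co g e'))"
    by (simp add: sum_product)
  also have "\<dots> \<in> AA"
  proof (intro AA_sum finite_supp)
    fix e e' assume "e \<in> supp f" "e' \<in> supp g"
    then have "e + e' \<in> S" using f g Sadd by blast
    then show "mon e (co f e) * mon e' (co g e') \<in> AA" unfolding mon_mult by (rule AA_mon)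
  qed
  finally show ?thesis .
qed

lemma srs_simps:
  "carrier (sub_ring_struct X) = X" "add (sub_ring_struct X) = (+)" "mult (sub_ring_struct X) = (*)"
  "zero (sub_ring_struct X) = 0" "one (sub_ring_struct X) = 1"
  by (simp_all add: sub_ring_struct_def)

lemma ring_AA: "ring (sub_ring_struct (AA :: ('i, 'v, 'k::field) PP set))"
proof (rule ringI)
  show "abelian_group (sub_ring_struct (AA :: ('i, 'v, 'k) PP set))"
  proof (rule abelian_groupI; unfold srs_simps)
    show "\<And>x y. x \<in> AA \<Longrightarrow> y \<in> AA \<Longrightarrow> x + y \<in> (AA :: ('i, 'v, 'k) PP set)" by (rule AA_add)
    show "0 \<in> (AA :: ('i, 'v, 'k) PP set)" by (rule AA_zero)
    show "\<And>x y z. x \<in> AA \<Longrightarrow> y \<in> AA \<Longrightarrow> z \<in> AA \<Longrightarrow> x + y + z = x + (y + z :: ('i, 'v, 'k) PP)"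
      by (rule add.assoc)
    show "\<And>x y. x \<in> AA \<Longrightarrow> y \<in> AA \<Longrightarrow> x + y = y + (x :: ('i, 'v, 'k) PP)" by (rule add.commute)
    show "\<And>x. x \<in> AA \<Longrightarrow> 0 + x = (x :: ('i, 'v, 'k) PP)" by (rule add_0_left)
    show "\<And>x. x \<in> AA \<Longrightarrow> \<exists>y\<in>AA. y + x = (0 :: ('i, 'v, 'k) PP)"
    proof -
      fix x :: "('i, 'v, 'k) PP" assume "x \<in> AA"
      then have "- x \<in> AA" by (rule AA_uminus)
      moreover have "- x + x = 0" by simp
      ultimately show "\<exists>y\<in>AA. y + x = 0" by blast
    qed
  qed
  show "monoid (sub_ring_struct (AA :: ('i, 'v, 'k) PP set))"
  proof (rule monoidI; unfold srs_simps)
    show "\<And>x y. x \<in> AA \<Longrightarrow> y \<in> AA \<Longrightarrow> x * y \<in> (AA :: ('i, 'v, 'k) PP set)" by (rule AA_mult)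
    show "1 \<in> (AA :: ('i, 'v, 'k) PP set)" by (rule AA_one)
    show "\<And>x y z. x \<in> AA \<Longrightarrow> y \<in> AA \<Longrightarrow> z \<in> AA \<Longrightarrow> x * y * z = x * (y * z :: ('i, 'v, 'k) PP)"
      by (rule mult.assoc)
    show "\<And>x. x \<in> AA \<Longrightarrow> 1 * x = (x :: ('i, 'v, 'k) PP)" by (rule mult_1_left)
    show "\<And>x. x \<in> AA \<Longrightarrow> x * 1 = (x :: ('i, 'v, 'k) PP)" by (rule mult_1_right)
  qed
  show "\<And>x y z. x \<in> carrier (sub_ring_struct AA) \<Longrightarrow> y \<in> carrier (sub_ring_struct AA) \<Longrightarrow> z \<in> carrier (sub_ring_struct AA) \<Longrightarrow>
    (x \<oplus>\<^bsub>sub_ring_struct AA\<^esub> y) \<otimes>\<^bsub>sub_ring_struct AA\<^esub> z = x \<otimes>\<^bsub>sub_ring_struct AA\<^esub> z \<oplus>\<^bsub>sub_ring_struct AA\<^esub> y \<otimes>\<^bsub>sub_ring_struct AA\<^esub> (z :: ('i, 'v, 'k) PP)"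
    unfolding srs_simps by (rule distrib_right)
  show "\<And>x y z. x \<in> carrier (sub_ring_struct AA) \<Longrightarrow> y \<in> carrier (sub_ring_struct AA) \<Longrightarrow> z \<in> carrier (sub_ring_struct AA) \<Longrightarrow>
    z \<otimes>\<^bsub>sub_ring_struct AA\<^esub> (x \<oplus>\<^bsub>sub_ring_struct AA\<^esub> y) = z \<otimes>\<^bsub>sub_ring_struct AA\<^esub> x \<oplus>\<^bsub>sub_ring_struct AA\<^esub> z \<otimes>\<^bsub>sub_ring_struct AA\<^esub> (y :: ('i, 'v, 'k) PP)"
    unfolding srs_simps by (rule distrib_left)
qed

lemma ideal_facts:
  fixes I :: "('i, 'v, 'k::field) PP set"
  assumes "ideal I (sub_ring_struct AA)"
  shows "I \<subseteq> AA" "0 \<in> I" "\<And>f g. f \<in> I \<Longrightarrow> g \<in> I \<Longrightarrow> f + g \<in> I"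
    "\<And>f. f \<in> I \<Longrightarrow> - f \<in> I" "\<And>f a. f \<in> I \<Longrightarrow> a \<in> AA \<Longrightarrow> f * a \<in> I"
proof -
  interpret ideal I "sub_ring_struct AA" by (rule assms)
  show "I \<subseteq> AA" using additive_subgroup.a_subset[OF is_additive_subgroup] by (simp add: sub_ring_struct_def)
  show "0 \<in> I" using additive_subgroup.zero_closed[OF is_additive_subgroup] by (simp add: sub_ring_struct_def)
  show "\<And>f g. f \<in> I \<Longrightarrow> g \<in> I \<Longrightarrow> f + g \<in> I" using additive_subgroup.a_closed[OF is_additive_subgroup] by (simp add: sub_ring_struct_def)
  show "\<And>f a. f \<in> I \<Longrightarrow> a \<in> AA \<Longrightarrow> f * a \<in> I" using I_r_closed by (simp add: sub_ring_struct_def)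
  show "- f \<in> I" if f: "f \<in> I" for f
  proof -
    have fA: "f \<in> AA" using f additive_subgroup.a_subset[OF is_additive_subgroup] by (auto simp: sub_ring_struct_def)
    have "\<ominus>\<^bsub>sub_ring_struct AA\<^esub> f = - f"
      by (rule minus_equality) (use fA AA_uminus in \<open>simp_all add: sub_ring_struct_def\<close>)
    then show ?thesis using additive_subgroup.a_inv_closed[OF is_additive_subgroup f] by simp
  qed
qed

lemma noeth_AA:
  assumes Sfg: "\<And>E. E \<subseteq> S \<Longrightarrow> (\<forall>e\<in>E. \<forall>s\<in>S. e + s \<in> E) \<Longrightarrow> \<exists>B\<subseteq>E. finite B \<and> (\<forall>e\<in>E. \<exists>b\<in>B. \<exists>s\<in>S. e = b + s)"
  shows "noetherian_ring (sub_ring_struct (AA :: ('i, 'v, 'k::field) PP set))"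
proof (rule ring.trivial_ideal_chain_imp_noetherian[OF ring_AA])
  fix C :: "('i, 'v, 'k) PP set set"
  assume Cne: "C \<noteq> {}" and ch: "subset.chain {I. ideal I (sub_ring_struct AA)} C"
  have Cid: "\<And>I. I \<in> C \<Longrightarrow> ideal I (sub_ring_struct AA)" using ch unfolding pred_on.chain_def by blast
  have Ccmp: "\<And>I I'. I \<in> C \<Longrightarrow> I' \<in> C \<Longrightarrow> I \<subseteq> I' \<or> I' \<subseteq> I" using ch unfolding pred_on.chain_def by blast
  define U where "U = \<Union>C"
  define E where "E = LE U"
  have shift: "e + s \<in> LE I" if h: "I \<in> C" "e \<in> LE I" "s \<in> S" for I e s
  proof -
    obtain f where f: "f \<in> I" "ismax e (supp f)" using h(2) unfolding LE_def by blast
    have "f * mon s 1 \<in> I" using ideal_facts(5)[OF Cid[OF h(1)] f(1)] AA_mon[OF h(3)] by blast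
    then show ?thesis using LE_shift[OF f(2)] by blast
  qed
  have ES: "E \<subseteq> S"
  proof
    fix e assume "e \<in> E"
    then obtain f I where "I \<in> C" "f \<in> I" "ismax e (supp f)" unfolding E_def U_def LE_def by blast
    then show "e \<in> S" using ideal_facts(1)[OF Cid] unfolding ismax_def by blast
  qed
  have Eid: "\<forall>e\<in>E. \<forall>s\<in>S. e + s \<in> E"
  proof (intro ballI)
    fix e s assume "e \<in> E" "s \<in> S"
    then obtain f I where fI: "I \<in> C" "f \<in> I" "ismax e (supp f)" unfolding E_def U_def LE_def by blast
    then have "e \<in> LE I" unfolding LE_def by blast
    then have "e + s \<in> LE I" using shift fI(1) \<open>s \<in> S\<close> by blast
    then show "e + s \<in> E" unfolding E_def U_def using LE_mono[of I "\<Union>C"] fI(1) by blast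
  qed
  obtain B where B: "B \<subseteq> E" "finite B" "\<forall>e\<in>E. \<exists>b\<in>B. \<exists>s\<in>S. e = b + s"
    using Sfg[OF ES Eid] by blast
  have "\<exists>I0\<in>C. B \<subseteq> LE I0" using B(2,1)
  proof (induction B rule: finite_induct)
    case empty then show ?case using Cne by blast
  next
    case (insert b B)
    then obtain I0 where I0: "I0 \<in> C" "B \<subseteq> LE I0" by blast
    have "b \<in> LE U" using insert E_def by blast
    then obtain f I1 where "I1 \<in> C" "f \<in> I1" "ismax b (supp f)" unfolding U_def LE_def by blast
    then have I1: "I1 \<in> C" "b \<in> LE I1" unfolding LE_def by blast+
    show ?case
    proof (cases "I0 \<subseteq> I1")
      case True then show ?thesis using I0 I1 LE_mono[OF True] by blast
    next
      case False then have "I1 \<subseteq> I0" using Ccmp I0(1) I1(1) by blast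
      then show ?thesis using I0 I1 LE_mono[of I1 I0] by blast
    qed
  qed
  then obtain I0 where I0: "I0 \<in> C" "B \<subseteq> LE I0" by blast
  have I0id: "ideal I0 (sub_ring_struct AA)" by (rule Cid[OF I0(1)])
  have "LE U \<subseteq> LE I0"
  proof
    fix e assume "e \<in> LE U"
    then obtain b s where "b \<in> B" "s \<in> S" "e = b + s" using B(3) E_def by blast
    then show "e \<in> LE I0" using shift[OF I0(1)] I0(2) by blast
  qed
  have "U \<subseteq> I0"
  proof (rule lt_inclusion)
    show "I0 \<subseteq> U" unfolding U_def using I0(1) by blast
    show "0 \<in> I0" by (rule ideal_facts(2)[OF I0id])
    show "LE U \<subseteq> LE I0" by fact
    show "h + g * mon 0 c \<in> I0" if hg: "h \<in> I0" "g \<in> I0" for h g c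
      using ideal_facts(3,5)[OF I0id] AA_mon[OF S0] hg by blast
    show "f - g * mon 0 c \<in> U" if fg: "f \<in> U" "g \<in> I0" for f g c
    proof -
      obtain I1 where I1: "I1 \<in> C" "f \<in> I1" using fg(1) unfolding U_def by blast
      obtain I2 where I2: "I2 \<in> C" "f \<in> I2" "g \<in> I2"
        using Ccmp[OF I1(1) I0(1)] I1 I0(1) fg(2) by blast
      have "g * mon 0 c \<in> I2" using ideal_facts(5)[OF Cid[OF I2(1)] I2(3)] AA_mon[OF S0] by blast
      then have "- (g * mon 0 c) \<in> I2" using ideal_facts(4)[OF Cid[OF I2(1)]] by blast
      then have "f + - (g * mon 0 c) \<in> I2" using ideal_facts(3)[OF Cid[OF I2(1)]] I2(2) by blast
      then show ?thesis using I2(1) unfolding U_def by auto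
    qed
  qed
  then have "U = I0" unfolding U_def using I0(1) by blast
  then show "\<Union>C \<in> C" using I0(1) unfolding U_def by simp
qed

end

lemma monomial_ideal_repr:
  fixes I :: "('v::finite, 'k::field) mpoly set"
  assumes "monomial_ideal I"
  shows "\<exists>G. finite G \<and> I = mideal (upc G)"
proof -
  obtain M where M: "M \<subseteq> range (\<lambda>m. Poly_Mapping.single m 1)" "I = ideal_gen M"
    using assms unfolding monomial_ideal_def by blast
  define M0 where "M0 = {m. (mnm m :: ('v, 'k) mpoly) \<in> M}"
  have "M = mnm ` M0" using M(1) unfolding M0_def by auto
  then have "I = mideal (upc M0)" using M(2) MI1 by metis
  moreover obtain G where "G \<subseteq> M0" "finite G" "upc G = upc M0" using upc_finite by blast
  ultimately show ?thesis by metis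
qed

lemma multi_pow_eq:
  fixes F :: "'i::finite \<Rightarrow> 'j \<Rightarrow> ('v::finite, 'k::field) mpoly set"
  assumes "\<And>i j. F i j = mideal (upc (G i j))"
  shows "multi_pow F j n = mideal (Eset G j n)"
proof -
  have "multi_pow F j n = ideal_prod (\<lambda>i. ideal_pow (F i j) (lkp n i)) UNIV" unfolding multi_pow_def by simp
  also have "\<dots> = mideal (upc (sprod (\<lambda>i. spow (G i j) (lkp n i)) UNIV))"
    by (rule MIprod) (simp_all add: assms MIpow)
  finally show ?thesis unfolding Eset_def .
qed

lemma rees_eq:
  fixes F :: "'i::finite \<Rightarrow> 'j \<Rightarrow> ('v::finite, 'k::field) mpoly set"
  assumes "\<And>i j. F i j = mideal (upc (G i j))"
  shows "rees_alg F = {f. supp f \<subseteq> Sset G}"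
proof -
  have "f \<in> rees_alg F \<longleftrightarrow> supp f \<subseteq> Sset G" for f
  proof -
    have "f \<in> rees_alg F \<longleftrightarrow> (\<forall>n j. kys (lkp f n) \<subseteq> Eset G j n)"
      unfolding rees_alg_def multi_pow_eq[OF assms] mideal_def by blast
    also have "\<dots> \<longleftrightarrow> supp f \<subseteq> Sset G"
    proof
      assume h: "\<forall>n j. kys (lkp f n) \<subseteq> Eset G j n"
      show "supp f \<subseteq> Sset G"
      proof
        fix e assume "e \<in> supp f"
        then have "snd e \<in> kys (lkp f (fst e))" unfolding supp_def co_def by (simp add: in_keys_iff)
        then have "\<forall>j. snd e \<in> Eset G j (fst e)" using h by blast
        then show "e \<in> Sset G" unfolding Sset_def by (cases e) simp
      qed
    next
      assume h: "supp f \<subseteq> Sset G"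
      show "\<forall>n j. kys (lkp f n) \<subseteq> Eset G j n"
      proof (intro allI subsetI)
        fix n j x assume "x \<in> kys (lkp f n)"
        then have "(n, x) \<in> supp f" unfolding supp_def co_def by (simp add: in_keys_iff)
        then have "(n, x) \<in> Sset G" using h by blast
        then show "x \<in> Eset G j n" unfolding Sset_def by simp
      qed
    qed
    finally show ?thesis .
  qed
  then show ?thesis by blast
qed

lemma Eset_zero:
  fixes G :: "'i::finite \<Rightarrow> 'j \<Rightarrow> ('v \<Rightarrow>\<^sub>0 nat) set" and a :: "'v \<Rightarrow>\<^sub>0 nat"
  shows "a \<in> Eset G j 0"
proof -
  have "(0 :: 'v \<Rightarrow>\<^sub>0 nat) \<in> sprod (\<lambda>i. spow (G i j) (lkp 0 i)) UNIV"
    unfolding sprod_def by (intro CollectI exI[of _ "\<lambda>_. 0"]) simp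
  then show ?thesis unfolding Eset_def upc_def by (intro CollectI bexI[of _ 0] exI[of _ a]) simp_all
qed

theorem proposition6p1:
  fixes F :: "'i::finite \<Rightarrow> 'j::finite \<Rightarrow> ('v::finite, 'k::field) mpoly set"
  assumes "\<And>i j. monomial_ideal (F i j)"
  shows "(\<forall>a. Poly_Mapping.single 0 a \<in> rees_alg F)
    \<and> (\<forall>f\<in>rees_alg F. \<forall>n. Poly_Mapping.single n (Poly_Mapping.lookup f n) \<in> rees_alg F)
    \<and> noetherian_ring (sub_ring_struct (rees_alg F))"
proof -
  have ex: "\<And>i j. \<exists>G. finite G \<and> F i j = mideal (upc G)"
    by (rule monomial_ideal_repr[OF assms])
  have "\<forall>i. \<exists>Gi. \<forall>j. finite (Gi j) \<and> F i j = mideal (upc (Gi j))"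
  proof
    fix i
    have "\<forall>j. \<exists>G. finite G \<and> F i j = mideal (upc G)" using ex by blast
    from choice[OF this] show "\<exists>Gi. \<forall>j. finite (Gi j) \<and> F i j = mideal (upc (Gi j))" .
  qed
  from choice[OF this] obtain G where G: "\<forall>i j. finite (G i j) \<and> F i j = mideal (upc (G i j))"
    by blast
  have fin: "\<And>i j. finite (G i j)" and FG: "\<And>i j. F i j = mideal (upc (G i j))" using G by auto
  have R: "rees_alg F = {f. supp f \<subseteq> Sset G}" by (rule rees_eq[OF FG])
  have mp: "\<And>j n. multi_pow F j n = mideal (Eset G j n)" by (rule multi_pow_eq[OF FG])
  have c1: "Poly_Mapping.single 0 a \<in> rees_alg F" for a
    unfolding rees_alg_def mp mideal_def
  proof (intro CollectI allI InterI)
    fix n and X :: "('v, 'k) mpoly set" assume "X \<in> range (\<lambda>j. {p. kys p \<subseteq> Eset G j n})"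
    then obtain j where X: "X = {p. kys p \<subseteq> Eset G j n}" by blast
    show "lkp (Poly_Mapping.single 0 a) n \<in> X"
    proof (cases "n = 0")
      case True then show ?thesis unfolding X using Eset_zero by auto
    next
      case False then show ?thesis unfolding X by (simp add: lookup_single when_def)
    qed
  qed
  have c2: "Poly_Mapping.single n (lkp f n) \<in> rees_alg F" if f: "f \<in> rees_alg F" for f n
    unfolding rees_alg_def
  proof (intro CollectI allI)
    fix m
    show "lkp (Poly_Mapping.single n (lkp f n)) m \<in> (\<Inter>j. multi_pow F j m)"
    proof (cases "m = n")
      case True then show ?thesis using f unfolding rees_alg_def by simp
    next
      case False then show ?thesis unfolding mp mideal_def by (simp add: lookup_single when_def)
    qed
  qed
  have "noetherian_ring (sub_ring_struct {f :: ('i, 'v, 'k) PP. supp f \<subseteq> Sset G})"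
  proof (rule noeth_AA)
    show "0 \<in> Sset G" by (rule S_zero[of G, OF fin])
    show "\<And>s s'. s \<in> Sset G \<Longrightarrow> s' \<in> Sset G \<Longrightarrow> s + s' \<in> Sset G" by (rule S_add[of G, OF fin])
    fix E assume E: "E \<subseteq> Sset G" "\<forall>e\<in>E. \<forall>s\<in>Sset G. e + s \<in> E"
    have "\<And>e s. e \<in> E \<Longrightarrow> s \<in> Sset G \<Longrightarrow> e + s \<in> E" using E(2) by blast
    then show "\<exists>B\<subseteq>E. finite B \<and> (\<forall>e\<in>E. \<exists>b\<in>B. \<exists>s\<in>Sset G. e = b + s)"
      by (rule Sideal_fg[of G E, OF fin E(1)])
  qed
  then have "noetherian_ring (sub_ring_struct (rees_alg F))" unfolding R .
  then show ?thesis using c1 c2 by blast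
qed

end
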